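(* Let $G$ be a finite simple graph. Then $G$ has no edges if and only if its chromatic symmetric function $X_G$ belongs to $\Gamma$.
   Context: For a finite simple graph $G=(V,E)$ with $V=\{v_1,\dots,v_n\}$, a proper coloring is a map $\kappa:V\to\{1,2,\dots\}$ with $\kappa(v_i)\neq\kappa(v_j)$ whenever $\{v_i,v_j\}\in E$. The chromatic symmetric function is $X_G=\sum_\kappa x_{\kappa(v_1)}\cdots x_{\kappa(v_n)}$, summed over all proper colorings. Let $p_r=\sum_i x_i^r$ be the power sum symmetric functions and $\Gamma=\mathbb{Q}[p_1,p_3,p_5,\dots]$ the subalgebra of the algebra $\Lambda$ of symmetric functions generated by the odd power sums. *)

theory Defs
  imports Complex_Main "HOL-Library.Multiset" "HOL-Library.FuncSet"
begin

text \<open>Formal power series over the rationals in countably many commuting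
variables x_0, x_1, ...  A monomial is represented by the multiset of the
indices of its variables (with multiplicity); a series is its coefficient
function.\<close>

type_synonym fps_inf = "nat multiset \<Rightarrow> rat"

definition fps_const :: "rat \<Rightarrow> fps_inf" where
  "fps_const c = (\<lambda>m. if m = {#} then c else 0)"

definition fps_add :: "fps_inf \<Rightarrow> fps_inf \<Rightarrow> fps_inf" where
  "fps_add f g = (\<lambda>m. f m + g m)"

definition fps_smult :: "rat \<Rightarrow> fps_inf \<Rightarrow> fps_inf" where
  "fps_smult c f = (\<lambda>m. c * f m)"

definition fps_mult :: "fps_inf \<Rightarrow> fps_inf \<Rightarrow> fps_inf" where
  "fps_mult f g = (\<lambda>m. \<Sum>a\<in>{a. a \<subseteq># m}. f a * g (m - a))"

definition power_sum :: "nat \<Rightarrow> fps_inf" where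
  "power_sum r = (\<lambda>m. if \<exists>i. m = replicate_mset r i then 1 else 0)"

inductive_set Gamma :: "fps_inf set" where
  const: "fps_const c \<in> Gamma"
| gen: "odd r \<Longrightarrow> power_sum r \<in> Gamma"
| add: "f \<in> Gamma \<Longrightarrow> g \<in> Gamma \<Longrightarrow> fps_add f g \<in> Gamma"
| smult: "f \<in> Gamma \<Longrightarrow> fps_smult c f \<in> Gamma"
| mult: "f \<in> Gamma \<Longrightarrow> g \<in> Gamma \<Longrightarrow> fps_mult f g \<in> Gamma"

definition simple_graph :: "'a set \<Rightarrow> 'a set set \<Rightarrow> bool" where
  "simple_graph V E \<longleftrightarrow> finite V \<and>
     (\<forall>e\<in>E. \<exists>u v. e = {u, v} \<and> u \<noteq> v \<and> u \<in> V \<and> v \<in> V)"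

definition proper_coloring :: "'a set \<Rightarrow> 'a set set \<Rightarrow> ('a \<Rightarrow> nat) \<Rightarrow> bool" where
  "proper_coloring V E \<kappa> \<longleftrightarrow> \<kappa> \<in> V \<rightarrow>\<^sub>E UNIV \<and>
     (\<forall>u\<in>V. \<forall>v\<in>V. {u, v} \<in> E \<longrightarrow> \<kappa> u \<noteq> \<kappa> v)"

definition chromatic_sym :: "'a set \<Rightarrow> 'a set set \<Rightarrow> fps_inf" where
  "chromatic_sym V E = (\<lambda>m. of_nat (card
     {\<kappa>. proper_coloring V E \<kappa> \<and> image_mset \<kappa> (mset_set V) = m}))"

end

theory Submission
  imports Defs
begin


lemma finite_submsets: "finite {a. a \<subseteq># (m::'b multiset)}"
proof (induction m)
  case empty then show ?case by simp
next
  case (add x m)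
  have "{a. a \<subseteq># add_mset x m} \<subseteq> {a. a \<subseteq># m} \<union> add_mset x ` {a. a \<subseteq># m}"
  proof
    fix a assume "a \<in> {a. a \<subseteq># add_mset x m}"
    then have a: "a \<subseteq># add_mset x m" by simp
    show "a \<in> {a. a \<subseteq># m} \<union> add_mset x ` {a. a \<subseteq># m}"
    proof (cases "x \<in># a")
      case True
      then have "a = add_mset x (a - {#x#})" by simp
      moreover have "a - {#x#} \<subseteq># m" using a
        unfolding subseteq_mset_def by (metis add_mset_remove_trivial count_diff diff_le_mono)
      ultimately show ?thesis by blast
    next
      case False
      have "count a y \<le> count m y" for y
      proof (cases "y = x")
        case True then show ?thesis using False by (simp add: not_in_iff)
      next
        case F: False then show ?thesis using mset_subset_eq_count[OF a, of y] by simp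
      qed
      then have "a \<subseteq># m" unfolding subseteq_mset_def by blast
      then show ?thesis by simp
    qed
  qed
  then show ?case using add by (meson finite_Un finite_imageI finite_subset)
qed

definition mk :: "nat multiset \<Rightarrow> nat \<Rightarrow> nat \<Rightarrow> nat multiset" where
  "mk N i j = N + replicate_mset i 0 + replicate_mset j 1"

definition ok :: "nat multiset \<Rightarrow> bool" where
  "ok N \<longleftrightarrow> 0 \<notin># N \<and> 1 \<notin># N"

definition filt :: "nat multiset \<Rightarrow> nat multiset" where
  "filt a = filter_mset (\<lambda>x. x \<noteq> 0 \<and> x \<noteq> 1) a"

lemma count_mk: "count (mk N i j) x = count N x + (if x = 0 then i else 0) + (if x = 1 then j else 0)"
  by (simp add: mk_def)

lemma mk_decomp: "a = mk (filt a) (count a 0) (count a 1)"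
  by (auto simp: multiset_eq_iff count_mk filt_def)

lemma ok_filt: "ok (filt a)" by (simp add: ok_def filt_def)

lemma filt_mk: "ok N \<Longrightarrow> filt (mk N i j) = N"
  apply (auto simp: multiset_eq_iff filt_def count_mk ok_def)
  by (metis count_inI)+

lemma count0_mk: "ok N \<Longrightarrow> count (mk N i j) 0 = i"
  by (simp add: count_mk ok_def not_in_iff)
lemma count1_mk: "ok N \<Longrightarrow> count (mk N i j) 1 = j"
  by (simp add: count_mk ok_def not_in_iff)

lemma mult_mk:
  assumes "ok N"
  shows "fps_mult f g (mk N i j) =
    (\<Sum>A\<in>{A. A \<subseteq># N}. \<Sum>i1\<le>i. \<Sum>j1\<le>j. f (mk A i1 j1) * g (mk (N - A) (i - i1) (j - j1)))"
proof -
  have "fps_mult f g (mk N i j) = (\<Sum>a\<in>{a. a \<subseteq># mk N i j}. f a * g (mk N i j - a))"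
    by (simp add: fps_mult_def)
  also have "\<dots> = (\<Sum>(A,i1,j1)\<in>{A. A \<subseteq># N} \<times> {..i} \<times> {..j}. f (mk A i1 j1) * g (mk (N - A) (i - i1) (j - j1)))"
  proof (rule sum.reindex_bij_witness[where i="\<lambda>(A,i1,j1). mk A i1 j1" and j="\<lambda>a. (filt a, count a 0, count a 1)"])
    fix a assume "a \<in> {a. a \<subseteq># mk N i j}"
    then show "(case (filt a, count a 0, count a 1) of (A, i1, j1) \<Rightarrow> mk A i1 j1) = a"
      using mk_decomp by simp
  next
    fix a assume "a \<in> {a. a \<subseteq># mk N i j}"
    then have s: "a \<subseteq># mk N i j" by simp
    have "filt a \<subseteq># N"
      unfolding filt_def subseteq_mset_def
    proof (intro allI)
      fix y
      have "count a y \<le> count (mk N i j) y" using s by (simp add: subseteq_mset_def)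
      then show "count (filter_mset (\<lambda>x. x \<noteq> 0 \<and> x \<noteq> 1) a) y \<le> count N y"
        by (auto simp: count_mk)
    qed
    moreover have "count a 0 \<le> i" "count a 1 \<le> j"
      using s assms unfolding subseteq_mset_def
      by (metis count0_mk count1_mk assms)+
    ultimately show "(filt a, count a 0, count a 1) \<in> {A. A \<subseteq># N} \<times> {..i} \<times> {..j}" by simp
  next
    fix x assume "x \<in> {A. A \<subseteq># N} \<times> {..i} \<times> {..j}"
    then obtain A i1 j1 where x: "x = (A,i1,j1)" "A \<subseteq># N" "i1 \<le> i" "j1 \<le> j" by auto
    have okA: "ok A" using x(2) assms unfolding ok_def by (meson mset_subset_eqD)
    show "(filt (case x of (A, i1, j1) \<Rightarrow> mk A i1 j1), count (case x of (A, i1, j1) \<Rightarrow> mk A i1 j1) 0,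
          count (case x of (A, i1, j1) \<Rightarrow> mk A i1 j1) 1) = x"
      using x okA by (simp add: filt_mk count_mk ok_def not_in_iff)
    show "(case x of (A, i1, j1) \<Rightarrow> mk A i1 j1) \<in> {a. a \<subseteq># mk N i j}"
      using x unfolding subseteq_mset_def by (auto simp: count_mk add_mono)
  next
    fix a assume "a \<in> {a. a \<subseteq># mk N i j}"
    then have s: "a \<subseteq># mk N i j" by simp
    have "mk N i j - a = mk (N - filt a) (i - count a 0) (j - count a 1)"
      using s assms unfolding subseteq_mset_def
      by (auto simp: multiset_eq_iff count_mk filt_def ok_def not_in_iff)
    then show "(case (filt a, count a 0, count a 1) of
          (A, i1, j1) \<Rightarrow> f (mk A i1 j1) * g (mk (N - A) (i - i1) (j - j1))) = f a * g (mk N i j - a)"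
      by (simp only: case_prod_conv mk_decomp[symmetric])
  qed
  also have "\<dots> = (\<Sum>A\<in>{A. A \<subseteq># N}. \<Sum>i1\<le>i. \<Sum>j1\<le>j. f (mk A i1 j1) * g (mk (N - A) (i - i1) (j - j1)))"
    by (simp add: sum.cartesian_product)
  finally show ?thesis .
qed



lemma conv_identity:
  fixes F G :: "nat \<Rightarrow> nat \<Rightarrow> 'r::comm_ring_1"
  shows "(\<Sum>j\<le>d. (-1)^j * (\<Sum>i1\<le>d-j. \<Sum>j1\<le>j. F i1 j1 * G (d-j-i1) (j-j1)))
       = (\<Sum>k\<le>d. (\<Sum>j\<le>k. (-1)^j * F (k-j) j) * (\<Sum>j\<le>d-k. (-1)^j * G (d-k-j) j))"
proof -
  have L: "(\<Sum>j\<le>d. (-1)^j * (\<Sum>i1\<le>d-j. \<Sum>j1\<le>j. F i1 j1 * G (d-j-i1) (j-j1)))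
     = (\<Sum>(j,i1,j1)\<in>Sigma {..d} (\<lambda>j. Sigma {..d-j} (\<lambda>i1. {..j})). (-1)^j * (F i1 j1 * G (d-j-i1) (j-j1)))"
    by (simp add: sum.Sigma sum_distrib_left) (rule sum.cong, auto)
  have R: "(\<Sum>k\<le>d. (\<Sum>j\<le>k. (-1)^j * F (k-j) j) * (\<Sum>j\<le>d-k. (-1)^j * G (d-k-j) j))
     = (\<Sum>(k,j1,j2)\<in>Sigma {..d} (\<lambda>k. Sigma {..k} (\<lambda>j1. {..d-k})). ((-1)^j1 * F (k-j1) j1) * ((-1)^j2 * G (d-k-j2) j2))"
    by (simp add: sum.Sigma sum_product)
  have M: "(\<Sum>(j,i1,j1)\<in>Sigma {..d} (\<lambda>j. Sigma {..d-j} (\<lambda>i1. {..j})). (-1)^j * (F i1 j1 * G (d-j-i1) (j-j1)))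
     = (\<Sum>(k,j1,j2)\<in>Sigma {..d} (\<lambda>k. Sigma {..k} (\<lambda>j1. {..d-k})). ((-1)^j1 * F (k-j1) j1) * ((-1)^j2 * G (d-k-j2) j2))"
  proof (rule sum.reindex_bij_witness[where i="\<lambda>(k,j1,j2). (j1+j2, k-j1, j1)" and j="\<lambda>(j,i1,j1). (i1+j1, j1, j-j1)"])
    fix a assume "a \<in> Sigma {..d} (\<lambda>j. Sigma {..d-j} (\<lambda>i1. {..j}))"
    then obtain j i1 j1 where a: "a = (j,i1,j1)" "j \<le> d" "i1 \<le> d-j" "j1 \<le> j" by auto
    show "(case case a of (j, i1, j1) \<Rightarrow> (i1 + j1, j1, j - j1) of (k, j1, j2) \<Rightarrow> (j1 + j2, k - j1, j1)) = a"
      using a by auto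
    show "(case a of (j, i1, j1) \<Rightarrow> (i1 + j1, j1, j - j1)) \<in> Sigma {..d} (\<lambda>k. Sigma {..k} (\<lambda>j1. {..d - k}))"
      using a by auto
    have e1: "(-1::'r)^j = (-1)^j1 * (-1)^(j-j1)" using a by (simp flip: power_add)
    have e2: "d - (i1 + j1) - (j - j1) = d - j - i1" using a by simp
    show "(case case a of (j, i1, j1) \<Rightarrow> (i1 + j1, j1, j - j1) of
        (k, j1, j2) \<Rightarrow> (- 1) ^ j1 * F (k - j1) j1 * ((- 1) ^ j2 * G (d - k - j2) j2)) =
       (case a of (j, i1, j1) \<Rightarrow> (- 1) ^ j * (F i1 j1 * G (d - j - i1) (j - j1)))"
      using a by (simp add: e1 e2 mult_ac add.commute)
  next
    fix b assume "b \<in> Sigma {..d} (\<lambda>k. Sigma {..k} (\<lambda>j1. {..d-k}))"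
    then obtain k j1 j2 where b: "b = (k,j1,j2)" "k \<le> d" "j1 \<le> k" "j2 \<le> d-k" by auto
    show "(case case b of (k, j1, j2) \<Rightarrow> (j1 + j2, k - j1, j1) of (j, i1, j1) \<Rightarrow> (i1 + j1, j1, j - j1)) = b"
      using b by auto
    show "(case b of (k, j1, j2) \<Rightarrow> (j1 + j2, k - j1, j1)) \<in> Sigma {..d} (\<lambda>j. Sigma {..d - j} (\<lambda>i1. {..j}))"
      using b by auto
  qed
  show ?thesis using L R M by simp
qed

lemma conv_zero:
  fixes F G :: "nat \<Rightarrow> nat \<Rightarrow> 'r::comm_ring_1"
  assumes "\<And>k. k > 0 \<Longrightarrow> (\<Sum>j\<le>k. (-1)^j * F (k-j) j) = 0"
    and "\<And>k. k > 0 \<Longrightarrow> (\<Sum>j\<le>k. (-1)^j * G (k-j) j) = 0"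
    and "d > 0"
  shows "(\<Sum>j\<le>d. (-1)^j * (\<Sum>i1\<le>d-j. \<Sum>j1\<le>j. F i1 j1 * G (d-j-i1) (j-j1))) = 0"
  unfolding conv_identity
proof (rule sum.neutral, rule ballI)
  fix k assume "k \<in> {..d}"
  show "(\<Sum>j\<le>k. (-1)^j * F (k-j) j) * (\<Sum>j\<le>d-k. (-1)^j * G (d-k-j) j) = 0"
  proof (cases "k = 0")
    case True then show ?thesis using assms(2)[of d] assms(3) by simp
  next
    case False then show ?thesis using assms(1)[of k] by simp
  qed
qed



definition S :: "fps_inf \<Rightarrow> nat multiset \<Rightarrow> nat \<Rightarrow> rat" where
  "S f N d = (\<Sum>j\<le>d. (-1)^j * f (mk N (d-j) j))"

definition Inv :: "fps_inf \<Rightarrow> bool" where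
  "Inv f \<longleftrightarrow> (\<forall>N d. ok N \<longrightarrow> d > 0 \<longrightarrow> S f N d = 0)"

lemma mk_nonempty: "j \<le> d \<Longrightarrow> 0 < d \<Longrightarrow> mk N (d-j) j \<noteq> {#}"
  by (cases j) (auto simp: mk_def)

lemma Inv_const: "Inv (fps_const c)"
  unfolding Inv_def S_def fps_const_def using mk_nonempty by simp

lemma ps_mk:
  assumes "ok N" "j \<le> d" "0 < d"
  shows "power_sum r (mk N (d-j) j) = (if N = {#} \<and> d = r \<and> (j = 0 \<or> j = d) then 1 else 0)"
proof -
  have "(\<exists>x. mk N (d-j) j = replicate_mset r x) \<longleftrightarrow> (N = {#} \<and> d = r \<and> (j = 0 \<or> j = d))"
  proof
    assume "\<exists>x. mk N (d-j) j = replicate_mset r x"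
    then obtain x where x: "mk N (d-j) j = replicate_mset r x" by blast
    have cnt: "count (mk N (d-j) j) y = (if y = x then r else 0)" for y
      using x by simp
    have c01: "count (mk N (d-j) j) 0 + count (mk N (d-j) j) 1 = d"
      using assms by (simp add: count_mk ok_def not_in_iff)
    have xr: "x \<in> {0,1}" "r > 0"
      using c01 cnt[of 0] cnt[of 1] assms(3) by (auto split: if_splits)
    have N: "N = {#}"
    proof (rule ccontr)
      assume "N \<noteq> {#}"
      then obtain y where y: "y \<in># N" by (meson multiset_nonemptyE)
      then have "y \<noteq> 0" "y \<noteq> 1" using assms(1) unfolding ok_def by (metis gr0I)+
      then have "count (mk N (d-j) j) y = 0" using cnt[of y] xr(1) by auto
      then show False using y by (simp add: count_mk) (metis not_in_iff)
    qed
    have "j = 0 \<or> j = d"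
      using cnt[of 0] cnt[of 1] N assms(2) by (simp add: count_mk split: if_splits)
    moreover have "d = r"
      using cnt[of 0] cnt[of 1] N xr assms(2) by (auto simp: count_mk split: if_splits)
    ultimately show "N = {#} \<and> d = r \<and> (j = 0 \<or> j = d)" using N by blast
  next
    assume a: "N = {#} \<and> d = r \<and> (j = 0 \<or> j = d)"
    then show "\<exists>x. mk N (d-j) j = replicate_mset r x"
      by (auto simp: mk_def)
  qed
  then show ?thesis unfolding power_sum_def by simp
qed

lemma Inv_gen: assumes "odd r" shows "Inv (power_sum r)"
  unfolding Inv_def
proof (intro allI impI)
  fix N d assume N: "ok N" and d: "(0::nat) < d"
  have "S (power_sum r) N d = (\<Sum>j\<le>d. (-1)^j * (if N = {#} \<and> d = r \<and> (j = 0 \<or> j = d) then 1 else 0))"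
    unfolding S_def by (rule sum.cong) (auto simp: ps_mk[OF N _ d])
  also have "\<dots> = 0"
  proof (cases "N = {#} \<and> d = r")
    case True
    have "(\<Sum>j\<le>d. (-1::rat)^j * (if N = {#} \<and> d = r \<and> (j = 0 \<or> j = d) then 1 else 0))
        = (\<Sum>j\<le>d. (if j = 0 then 1 else 0) + (if j = d then (-1)^d else 0))"
      by (rule sum.cong) (use True d in auto)
    also have "\<dots> = 1 + (-1)^d" by (simp add: sum.distrib)
    also have "\<dots> = 0" using True assms by simp
    finally show ?thesis .
  qed auto
  finally show "S (power_sum r) N d = 0" .
qed

lemma Inv_add: "Inv f \<Longrightarrow> Inv g \<Longrightarrow> Inv (fps_add f g)"
  unfolding Inv_def S_def fps_add_def by (simp add: distrib_left sum.distrib)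

lemma Inv_smult: "Inv f \<Longrightarrow> Inv (fps_smult c f)"
proof -
  assume "Inv f"
  then show ?thesis unfolding Inv_def S_def fps_smult_def
    by (simp add: mult.left_commute flip: sum_distrib_left)
qed

lemma ok_sub: "ok N \<Longrightarrow> A \<subseteq># N \<Longrightarrow> ok A"
  unfolding ok_def by (meson mset_subset_eqD)

lemma ok_diff: "ok N \<Longrightarrow> ok (N - A)"
  unfolding ok_def by (meson in_diffD)

lemma Inv_mult:
  assumes f: "Inv f" and g: "Inv g"
  shows "Inv (fps_mult f g)"
  unfolding Inv_def
proof (intro allI impI)
  fix N d assume N: "ok N" and d: "(0::nat) < d"
  have "S (fps_mult f g) N d = (\<Sum>j\<le>d. (-1)^j * (\<Sum>A\<in>{A. A \<subseteq># N}. \<Sum>i1\<le>d-j. \<Sum>j1\<le>j.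
          f (mk A i1 j1) * g (mk (N - A) (d - j - i1) (j - j1))))"
    unfolding S_def by (simp add: mult_mk[OF N])
  also have "\<dots> = (\<Sum>A\<in>{A. A \<subseteq># N}. \<Sum>j\<le>d. (-1)^j * (\<Sum>i1\<le>d-j. \<Sum>j1\<le>j.
          f (mk A i1 j1) * g (mk (N - A) (d - j - i1) (j - j1))))"
    by (simp add: sum_distrib_left sum.swap[of _ "{A. A \<subseteq># N}"])
  also have "\<dots> = 0"
  proof (rule sum.neutral, rule ballI)
    fix A assume "A \<in> {A. A \<subseteq># N}"
    then have okA: "ok A" and okB: "ok (N - A)" using ok_sub[OF N] ok_diff[OF N] by auto
    show "(\<Sum>j\<le>d. (-1)^j * (\<Sum>i1\<le>d-j. \<Sum>j1\<le>j.
          f (mk A i1 j1) * g (mk (N - A) (d - j - i1) (j - j1)))) = 0"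
      apply (rule conv_zero[where F="\<lambda>i j. f (mk A i j)" and G="\<lambda>i j. g (mk (N - A) i j)", OF _ _ d])
      using f g okA okB unfolding Inv_def S_def by auto
  qed
  finally show "S (fps_mult f g) N d = 0" .
qed

lemma Gamma_Inv: "f \<in> Gamma \<Longrightarrow> Inv f"
  by (induction rule: Gamma.induct) (auto intro: Inv_const Inv_gen Inv_add Inv_smult Inv_mult)



fun pw :: "nat \<Rightarrow> fps_inf" where
  "pw 0 = fps_const 1"
| "pw (Suc k) = fps_mult (power_sum 1) (pw k)"

lemma pw_Gamma: "pw k \<in> Gamma"
proof (induction k)
  case (Suc k)
  have "power_sum 1 \<in> Gamma" by (rule Gamma.gen) simp
  then show ?case using Suc by (simp add: Gamma.mult)
qed (simp add: Gamma.const)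

lemma mult_p1: "fps_mult (power_sum 1) X m = (\<Sum>i\<in>set_mset m. X (m - {#i#}))"
proof -
  have "fps_mult (power_sum 1) X m = (\<Sum>a\<in>{a. a \<subseteq># m}. if a \<in> (\<lambda>i. {#i#}) ` set_mset m then X (m - a) else 0)"
    unfolding fps_mult_def power_sum_def
    by (rule sum.cong) (auto simp: image_iff)
  also have "\<dots> = (\<Sum>a\<in>{a. a \<subseteq># m} \<inter> (\<lambda>i. {#i#}) ` set_mset m. X (m - a))"
    by (simp add: sum.inter_restrict[OF finite_submsets])
  also have "{a. a \<subseteq># m} \<inter> (\<lambda>i. {#i#}) ` set_mset m = (\<lambda>i. {#i#}) ` set_mset m"
    by auto
  also have "(\<Sum>a\<in>(\<lambda>i. {#i#}) ` set_mset m. X (m - a)) = (\<Sum>i\<in>set_mset m. X (m - {#i#}))"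
    by (subst sum.reindex) (auto simp: inj_on_def)
  finally show ?thesis .
qed

lemma fin_col: "finite V \<Longrightarrow> finite {\<kappa>. \<kappa> \<in> V \<rightarrow>\<^sub>E UNIV \<and> image_mset \<kappa> (mset_set V) = M}"
proof -
  assume V: "finite V"
  have "{\<kappa>. \<kappa> \<in> V \<rightarrow>\<^sub>E UNIV \<and> image_mset \<kappa> (mset_set V) = M} \<subseteq> V \<rightarrow>\<^sub>E set_mset M"
    using V by (auto simp: PiE_def Pi_def)
  then show ?thesis using V by (meson finite_PiE finite_set_mset finite_subset)
qed

lemma col_insert:
  assumes V: "finite V" and v: "v \<notin> V"
  shows "{\<kappa>. \<kappa> \<in> insert v V \<rightarrow>\<^sub>E UNIV \<and> image_mset \<kappa> (mset_set (insert v V)) = m}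
    = (\<Union>i\<in>set_mset m. (\<lambda>\<kappa>. \<kappa>(v:=i)) ` {\<kappa>. \<kappa> \<in> V \<rightarrow>\<^sub>E UNIV \<and> image_mset \<kappa> (mset_set V) = m - {#i#}})"
proof (rule set_eqI, rule iffI)
  fix \<kappa> assume "\<kappa> \<in> {\<kappa>. \<kappa> \<in> insert v V \<rightarrow>\<^sub>E UNIV \<and> image_mset \<kappa> (mset_set (insert v V)) = m}"
  then have k: "\<kappa> \<in> insert v V \<rightarrow>\<^sub>E UNIV" and im: "image_mset \<kappa> (mset_set (insert v V)) = m" by auto
  have im2: "add_mset (\<kappa> v) (image_mset \<kappa> (mset_set V)) = m" using im V v by simp
  define \<kappa>' where "\<kappa>' = \<kappa>(v := undefined)"
  have "\<kappa>' \<in> V \<rightarrow>\<^sub>E UNIV" using k v unfolding \<kappa>'_def by (auto simp: PiE_def extensional_def)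
  moreover have "image_mset \<kappa>' (mset_set V) = image_mset \<kappa> (mset_set V)"
    using v V unfolding \<kappa>'_def by (intro image_mset_cong) auto
  ultimately have "\<kappa>' \<in> {\<mu>. \<mu> \<in> V \<rightarrow>\<^sub>E UNIV \<and> image_mset \<mu> (mset_set V) = m - {#\<kappa> v#}}"
    using im2 by auto
  moreover have "\<kappa> = \<kappa>'(v := \<kappa> v)" unfolding \<kappa>'_def by simp
  moreover have "\<kappa> v \<in># m" using im2 by auto
  ultimately show "\<kappa> \<in> (\<Union>i\<in>set_mset m. (\<lambda>\<kappa>. \<kappa>(v:=i)) ` {\<kappa>. \<kappa> \<in> V \<rightarrow>\<^sub>E UNIV \<and> image_mset \<kappa> (mset_set V) = m - {#i#}})"
    by blast
next
  fix \<kappa> assume "\<kappa> \<in> (\<Union>i\<in>set_mset m. (\<lambda>\<kappa>. \<kappa>(v:=i)) ` {\<kappa>. \<kappa> \<in> V \<rightarrow>\<^sub>E UNIV \<and> image_mset \<kappa> (mset_set V) = m - {#i#}})"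
  then obtain i \<kappa>' where i: "i \<in># m" and k': "\<kappa>' \<in> V \<rightarrow>\<^sub>E UNIV" and im: "image_mset \<kappa>' (mset_set V) = m - {#i#}"
    and k: "\<kappa> = \<kappa>'(v := i)" by auto
  have "\<kappa> \<in> insert v V \<rightarrow>\<^sub>E UNIV" using k k' by (auto simp: PiE_def extensional_def)
  moreover have "image_mset \<kappa> (mset_set V) = image_mset \<kappa>' (mset_set V)"
    using v V unfolding k by (intro image_mset_cong) auto
  then have "image_mset \<kappa> (mset_set (insert v V)) = m"
    using V v i im k by simp
  ultimately show "\<kappa> \<in> {\<kappa>. \<kappa> \<in> insert v V \<rightarrow>\<^sub>E UNIV \<and> image_mset \<kappa> (mset_set (insert v V)) = m}"
    by simp
qed

lemma chrom_empty: "finite (V::'a set) \<Longrightarrow> chromatic_sym V {} = pw (card V)"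
proof (induction V rule: finite_induct)
  case empty
  show ?case
  proof
    fix m
    have eq: "{\<kappa>. proper_coloring ({}::'a set) {} \<kappa> \<and> image_mset \<kappa> (mset_set {}) = m}
        = (if m = {#} then {\<lambda>_. undefined} else {})"
      by (auto simp: proper_coloring_def)
    have eq2: "Collect (proper_coloring ({}::'a set) {}) = {\<lambda>_. undefined}"
      by (auto simp: proper_coloring_def)
    show "chromatic_sym {} {} m = pw (card {}) m"
      unfolding chromatic_sym_def by (simp add: fps_const_def proper_coloring_def PiE_empty_domain)
  qed
next
  case (insert v V)
  show ?case
  proof
    fix m
    have pc: "proper_coloring W {} \<kappa> \<longleftrightarrow> \<kappa> \<in> W \<rightarrow>\<^sub>E UNIV" for W and \<kappa> :: "'a \<Rightarrow> nat"
      by (simp add: proper_coloring_def)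
    have "chromatic_sym (insert v V) {} m
       = of_nat (card (\<Union>i\<in>set_mset m. (\<lambda>\<kappa>. \<kappa>(v:=i)) ` {\<kappa>. \<kappa> \<in> V \<rightarrow>\<^sub>E UNIV \<and> image_mset \<kappa> (mset_set V) = m - {#i#}}))"
    proof -
      have "chromatic_sym (insert v V) {} m = of_nat (card {\<kappa>. \<kappa> \<in> insert v V \<rightarrow>\<^sub>E UNIV \<and> image_mset \<kappa> (mset_set (insert v V)) = m})"
        by (simp only: chromatic_sym_def pc)
      then show ?thesis by (simp only: col_insert[OF insert(1,2)])
    qed
    also have "card (\<Union>i\<in>set_mset m. (\<lambda>\<kappa>. \<kappa>(v:=i)) ` {\<kappa>. \<kappa> \<in> V \<rightarrow>\<^sub>E UNIV \<and> image_mset \<kappa> (mset_set V) = m - {#i#}})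
       = (\<Sum>i\<in>set_mset m. card ((\<lambda>\<kappa>. \<kappa>(v:=i)) ` {\<kappa>. \<kappa> \<in> V \<rightarrow>\<^sub>E UNIV \<and> image_mset \<kappa> (mset_set V) = m - {#i#}}))"
    proof (rule card_UN_disjoint)
      show "finite (set_mset m)" by simp
      show "\<forall>i\<in>set_mset m. finite ((\<lambda>\<kappa>. \<kappa>(v:=i)) ` {\<kappa>. \<kappa> \<in> V \<rightarrow>\<^sub>E UNIV \<and> image_mset \<kappa> (mset_set V) = m - {#i#}})"
        using fin_col[OF insert(1)] by blast
      show "\<forall>i\<in>set_mset m. \<forall>j\<in>set_mset m. i \<noteq> j \<longrightarrow>
        (\<lambda>\<kappa>. \<kappa>(v:=i)) ` {\<kappa>. \<kappa> \<in> V \<rightarrow>\<^sub>E UNIV \<and> image_mset \<kappa> (mset_set V) = m - {#i#}} \<inter>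
        (\<lambda>\<kappa>. \<kappa>(v:=j)) ` {\<kappa>. \<kappa> \<in> V \<rightarrow>\<^sub>E UNIV \<and> image_mset \<kappa> (mset_set V) = m - {#j#}} = {}"
      proof (intro ballI impI)
        fix i j :: nat assume "i \<noteq> j"
        then show "(\<lambda>\<kappa>. \<kappa>(v:=i)) ` {\<kappa>. \<kappa> \<in> V \<rightarrow>\<^sub>E UNIV \<and> image_mset \<kappa> (mset_set V) = m - {#i#}} \<inter>
        (\<lambda>\<kappa>. \<kappa>(v:=j)) ` {\<kappa>. \<kappa> \<in> V \<rightarrow>\<^sub>E UNIV \<and> image_mset \<kappa> (mset_set V) = m - {#j#}} = {}"
          by (auto simp: fun_eq_iff) (metis fun_upd_same)
      qed
    qed
    also have "\<dots> = (\<Sum>i\<in>set_mset m. card {\<kappa>. \<kappa> \<in> V \<rightarrow>\<^sub>E UNIV \<and> image_mset \<kappa> (mset_set V) = m - {#i#}})"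
    proof (rule sum.cong[OF refl], rule card_image, rule inj_onI)
      fix i x y assume "x \<in> {\<kappa>. \<kappa> \<in> V \<rightarrow>\<^sub>E UNIV \<and> image_mset \<kappa> (mset_set V) = m - {#i#}}"
        "y \<in> {\<kappa>. \<kappa> \<in> V \<rightarrow>\<^sub>E UNIV \<and> image_mset \<kappa> (mset_set V) = m - {#i#}}" "x(v := i) = y(v := i)"
      then have xe: "x v = undefined" "y v = undefined"
        using insert(2) by (auto simp: PiE_def extensional_def)
      have xy: "x z = y z" if "z \<noteq> v" for z
        using fun_cong[OF \<open>x(v := i) = y(v := i)\<close>, of z] that by simp
      show "x = y"
      proof
        fix z show "x z = y z" using xe xy by (cases "z = v") auto
      qed
    qed
    finally have "chromatic_sym (insert v V) {} m = (\<Sum>i\<in>set_mset m. chromatic_sym V {} (m - {#i#}))"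
      by (simp add: chromatic_sym_def pc)
    then show "chromatic_sym (insert v V) {} m = pw (card (insert v V)) m"
      using insert mult_p1[of "pw (card V)" m] by simp
  qed
qed



lemma card_fiber:
  assumes "finite V" "image_mset \<kappa> (mset_set V) = M"
  shows "card {x\<in>V. \<kappa> x = c} = count M c"
proof -
  have "count M c = (\<Sum>x | x \<in># mset_set V \<and> c = \<kappa> x. count (mset_set V) x)"
    using assms(2) count_image_mset'[of \<kappa> "mset_set V" c] by simp
  also have "\<dots> = (\<Sum>x\<in>{x\<in>V. \<kappa> x = c}. 1)"
    using assms(1) by (intro sum.cong) auto
  finally show ?thesis by simp
qed

definition Phi :: "'a set \<Rightarrow> ('a \<Rightarrow> nat) \<Rightarrow> ('a \<Rightarrow> nat) \<Rightarrow> ('a \<Rightarrow> nat)" where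
  "Phi V idx \<kappa> = (\<lambda>x. if x \<in> V \<and> \<kappa> x = 0 \<and> (\<exists>y\<in>V. \<kappa> y = 0 \<and> idx y < idx x) then 1
     else if x \<in> V \<and> \<kappa> x = 1 \<and> (\<exists>y\<in>V. \<kappa> y = 1 \<and> idx y < idx x) then 0 else \<kappa> x)"

lemma Phi_struct:
  fixes idx :: "'a \<Rightarrow> nat"
  assumes "p \<in> V" "q \<in> V" "idx p < idx q" "{x\<in>V. \<kappa> x = c} = {p,q}" "{x\<in>V. \<kappa> x = 1 - c} = {}" "c \<le> 1"
  shows "Phi V idx \<kappa> = \<kappa>(q := 1 - c)"
proof
  fix x
  have c01: "c = 0 \<or> c = 1" using assms(6) by auto
  have pc: "\<kappa> p = c" "\<kappa> q = c" using assms(1,2,4) by blast+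
  have zc: "y \<in> V \<Longrightarrow> \<kappa> y = c \<Longrightarrow> y = p \<or> y = q" for y using assms(4) by blast
  have nc: "y \<in> V \<Longrightarrow> \<kappa> y \<noteq> 1 - c" for y using assms(5) by blast
  have ex: "\<exists>y\<in>V. \<kappa> y = c \<and> idx y < idx q" using pc assms(1,3) by blast
  have nex: "\<not> (\<exists>y\<in>V. \<kappa> y = c \<and> idx y < idx p)"
  proof
    assume "\<exists>y\<in>V. \<kappa> y = c \<and> idx y < idx p"
    then obtain y where "y \<in> V" "\<kappa> y = c" "idx y < idx p" by blast
    then show False using zc[of y] assms(3) by auto
  qed
  show "Phi V idx \<kappa> x = (\<kappa>(q := 1 - c)) x"
  proof (cases "x = q")
    case True
    show ?thesis
    proof (cases "c = 0")
      case c0: True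
      then show ?thesis using True ex pc assms(2) unfolding Phi_def by simp
    next
      case c1: False
      then have "c = 1" using c01 by simp
      then show ?thesis using True ex pc assms(2) unfolding Phi_def by simp
    qed
  next
    case xq: False
    show ?thesis
    proof (cases "x \<in> V \<and> \<kappa> x = c")
      case True
      then have xp: "x = p" using zc xq by blast
      show ?thesis
      proof (cases "c = 0")
        case c0: True
        then show ?thesis using xp xq nex pc unfolding Phi_def by simp
      next
        case c1: False
        then have "c = 1" using c01 by simp
        then show ?thesis using xp xq nex pc unfolding Phi_def by simp
      qed
    next
      case False
      have "\<not> (x \<in> V \<and> \<kappa> x = 0)" "\<not> (x \<in> V \<and> \<kappa> x = 1)"
        using False nc[of x] c01 by auto
      then show ?thesis using xq unfolding Phi_def by auto
    qed
  qed
qed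



lemma two_struct:
  fixes idx :: "'a \<Rightarrow> nat"
  assumes "inj_on idx V" "card {x\<in>V. \<kappa> x = c} = 2"
  shows "\<exists>p q. p \<in> V \<and> q \<in> V \<and> idx p < idx q \<and> {x\<in>V. \<kappa> x = c} = {p,q}"
proof -
  obtain a b where ab: "{x\<in>V. \<kappa> x = c} = {a,b}" "a \<noteq> b" using assms(2) card_2_iff by metis
  then have "a \<in> V" "b \<in> V" by blast+
  then have "idx a \<noteq> idx b" using assms(1) ab(2) by (meson inj_on_contraD)
  show ?thesis
  proof (cases "idx a < idx b")
    case True then show ?thesis using ab \<open>a \<in> V\<close> \<open>b \<in> V\<close>
      by (intro exI[of _ a] exI[of _ b]) simp
  next
    case False
    then have "idx b < idx a" using \<open>idx a \<noteq> idx b\<close> by simp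
    moreover have "{x\<in>V. \<kappa> x = c} = {b,a}" using ab(1) by auto
    ultimately show ?thesis using \<open>a \<in> V\<close> \<open>b \<in> V\<close>
      by (intro exI[of _ b] exI[of _ a]) simp
  qed
qed

lemma image_upd:
  assumes "finite V" "q \<in> V"
  shows "image_mset (\<kappa>(q := c)) (mset_set V) = add_mset c (image_mset \<kappa> (mset_set V) - {#\<kappa> q#})"
proof -
  have V: "mset_set V = add_mset q (mset_set (V - {q}))"
  proof -
    have "mset_set (insert q (V - {q})) = add_mset q (mset_set (V - {q}))"
      using assms(1) by (simp add: mset_set.insert_remove)
    then show ?thesis using insert_Diff[OF assms(2)] by simp
  qed
  have "image_mset (\<kappa>(q := c)) (mset_set (V - {q})) = image_mset \<kappa> (mset_set (V - {q}))"
    using assms by (intro image_mset_cong) auto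
  then show ?thesis unfolding V by simp
qed

lemma struct_c:
  fixes idx :: "'a \<Rightarrow> nat"
  assumes "finite V" "inj_on idx V" "c \<le> 1"
    "card {x\<in>V. \<kappa> x = c} = 2" "card {x\<in>V. \<kappa> x = 1 - c} = 0"
  shows "\<exists>p q. p \<in> V \<and> q \<in> V \<and> idx p < idx q \<and> {x\<in>V. \<kappa> x = c} = {p,q}
     \<and> Phi V idx \<kappa> = \<kappa>(q := 1 - c)
     \<and> {x\<in>V. Phi V idx \<kappa> x = c} = {p} \<and> {x\<in>V. Phi V idx \<kappa> x = 1 - c} = {q}"
proof -
  obtain p q where pq: "p \<in> V" "q \<in> V" "idx p < idx q" "{x\<in>V. \<kappa> x = c} = {p,q}"
    using two_struct[OF assms(2,4)] by blast
  have none: "{x\<in>V. \<kappa> x = 1 - c} = {}" using assms(1,5) by simp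
  have Ph: "Phi V idx \<kappa> = \<kappa>(q := 1 - c)" by (rule Phi_struct[OF pq none assms(3)])
  have pnq: "p \<noteq> q" using pq(3) by auto
  have c1: "c \<noteq> 1 - c" using assms(3) by arith
  have mem: "(x \<in> V \<and> \<kappa> x = c) = (x = p \<or> x = q)" for x
    using pq(4) unfolding set_eq_iff by simp
  have A: "{x\<in>V. (\<kappa>(q := 1 - c)) x = c} = {p}"
  proof (rule set_eqI)
    fix x show "x \<in> {x\<in>V. (\<kappa>(q := 1 - c)) x = c} \<longleftrightarrow> x \<in> {p}"
      using mem[of x] pnq c1 by (cases "x = q") auto
  qed
  have B: "{x\<in>V. (\<kappa>(q := 1 - c)) x = 1 - c} = {q}"
  proof (rule set_eqI)
    fix x show "x \<in> {x\<in>V. (\<kappa>(q := 1 - c)) x = 1 - c} \<longleftrightarrow> x \<in> {q}"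
      using pq(2) none by (cases "x = q") auto
  qed
  show ?thesis using pq Ph A B by auto
qed



definition Col :: "'a set \<Rightarrow> 'a set set \<Rightarrow> nat multiset \<Rightarrow> ('a \<Rightarrow> nat) set" where
  "Col V E M = {\<kappa>. proper_coloring V E \<kappa> \<and> image_mset \<kappa> (mset_set V) = M}"

lemma chrom_Col: "chromatic_sym V E M = of_nat (card (Col V E M))"
  by (simp add: chromatic_sym_def Col_def)

lemma sg_edge:
  assumes "simple_graph V E" "{a,b} \<in> E"
  shows "a \<in> V" "b \<in> V" "a \<noteq> b"
proof -
  obtain x y where xy: "{a,b} = {x,y}" "x \<noteq> y" "x \<in> V" "y \<in> V"
    using assms unfolding simple_graph_def by blast
  then show "a \<in> V" "b \<in> V" by (auto simp: doubleton_eq_iff)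
  show "a \<noteq> b" using xy(1,2) by (auto simp: doubleton_eq_iff)
qed

lemma fin_Col: "finite V \<Longrightarrow> finite (Col V E M)"
proof -
  assume V: "finite V"
  have "Col V E M \<subseteq> {\<kappa>. \<kappa> \<in> V \<rightarrow>\<^sub>E UNIV \<and> image_mset \<kappa> (mset_set V) = M}"
    unfolding Col_def proper_coloring_def by auto
  then show ?thesis using fin_col[OF V] by (rule finite_subset)
qed

lemma upd_proper:
  assumes sg: "simple_graph V E" and pc: "proper_coloring V E \<kappa>" and q: "q \<in> V"
    and nd: "\<forall>x\<in>V. \<kappa> x \<noteq> d"
  shows "proper_coloring V E (\<kappa>(q := d))"
  unfolding proper_coloring_def
proof (intro conjI ballI impI)
  show "\<kappa>(q := d) \<in> V \<rightarrow>\<^sub>E UNIV" using pc q unfolding proper_coloring_def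
    by (auto simp: PiE_def extensional_def)
next
  fix a b assume ab: "a \<in> V" "b \<in> V" "{a, b} \<in> E"
  have "a \<noteq> b" using sg_edge[OF sg ab(3)] by simp
  moreover have "\<kappa> a \<noteq> \<kappa> b" using pc ab unfolding proper_coloring_def by blast
  ultimately show "(\<kappa>(q := d)) a \<noteq> (\<kappa>(q := d)) b"
    using nd ab by (cases "a = q"; cases "b = q") auto
qed

lemma count_Mc:
  assumes "ok N" "c \<le> 1"
  shows "count (mk N (2 - 2*c) (2*c)) c = 2" "count (mk N (2 - 2*c) (2*c)) (1 - c) = 0"
    "add_mset (1 - c) (mk N (2 - 2*c) (2*c) - {#c#}) = mk N 1 1"
proof -
  have "c = 0 \<or> c = 1" using assms(2) by auto
  moreover have n01: "count N 0 = 0" "count N 1 = 0" using assms(1) unfolding ok_def by (simp_all add: not_in_iff)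
  ultimately show "count (mk N (2 - 2*c) (2*c)) c = 2" "count (mk N (2 - 2*c) (2*c)) (1 - c) = 0"
    "add_mset (1 - c) (mk N (2 - 2*c) (2*c) - {#c#}) = mk N 1 1"
    by (auto simp: count_mk multiset_eq_iff)
qed

lemma phi_props:
  fixes idx :: "'a \<Rightarrow> nat"
  assumes V: "finite V" and sg: "simple_graph V E" and idx: "inj_on idx V" and N: "ok N" and c: "c \<le> 1"
    and k: "\<kappa> \<in> Col V E (mk N (2 - 2*c) (2*c))"
    and ab: "{a,b} \<in> E" "\<kappa>0 a = c" "\<kappa>0 b = 1 - c"
  shows "\<exists>p q. p \<in> V \<and> q \<in> V \<and> idx p < idx q \<and> \<kappa> = (Phi V idx \<kappa>)(q := c)
     \<and> {x\<in>V. Phi V idx \<kappa> x = c} = {p} \<and> {x\<in>V. Phi V idx \<kappa> x = 1 - c} = {q}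
     \<and> Phi V idx \<kappa> \<in> Col V E (mk N 1 1) \<and> Phi V idx \<kappa> \<noteq> \<kappa>0"
proof -
  have pc: "proper_coloring V E \<kappa>" and im: "image_mset \<kappa> (mset_set V) = mk N (2 - 2*c) (2*c)"
    using k unfolding Col_def by auto
  have c2: "card {x\<in>V. \<kappa> x = c} = 2" using card_fiber[OF V im] count_Mc[OF N c] by simp
  have c0: "card {x\<in>V. \<kappa> x = 1 - c} = 0" using card_fiber[OF V im] count_Mc[OF N c] by simp
  obtain p q where pq: "p \<in> V" "q \<in> V" "idx p < idx q" "{x\<in>V. \<kappa> x = c} = {p,q}"
     "Phi V idx \<kappa> = \<kappa>(q := 1 - c)"
     "{x\<in>V. Phi V idx \<kappa> x = c} = {p}" "{x\<in>V. Phi V idx \<kappa> x = 1 - c} = {q}"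
    using struct_c[OF V idx c c2 c0] by blast
  have none: "\<forall>x\<in>V. \<kappa> x \<noteq> 1 - c" using c0 V by auto
  have kq: "\<kappa> q = c" using pq(2,4) by blast
  have rec: "\<kappa> = (Phi V idx \<kappa>)(q := c)" using pq(5) kq by auto
  have "proper_coloring V E (\<kappa>(q := 1 - c))" by (rule upd_proper[OF sg pc pq(2) none])
  moreover have "image_mset (\<kappa>(q := 1 - c)) (mset_set V) = mk N 1 1"
    using image_upd[OF V pq(2), of \<kappa> "1 - c"] im kq count_Mc(3)[OF N c] by simp
  ultimately have inC: "Phi V idx \<kappa> \<in> Col V E (mk N 1 1)" using pq(5) unfolding Col_def by simp
  have ne: "Phi V idx \<kappa> \<noteq> \<kappa>0"
  proof
    assume eq: "Phi V idx \<kappa> = \<kappa>0"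
    have abV: "a \<in> V" "b \<in> V" "a \<noteq> b" using sg_edge[OF sg ab(1)] by auto
    have c1: "c \<noteq> 1 - c" using c by arith
    have "b = q"
    proof (rule ccontr)
      assume "b \<noteq> q"
      then have "\<kappa> b = 1 - c" using eq ab(3) pq(5) by (metis fun_upd_other)
      then show False using none abV by blast
    qed
    have "a \<noteq> q" using eq ab(2) pq(5) c1 \<open>b = q\<close> abV(3) by blast
    then have "\<kappa> a = c" using eq ab(2) pq(5) by (metis fun_upd_other)
    then have "\<kappa> a = \<kappa> b" using kq \<open>b = q\<close> by simp
    then show False using pc abV ab(1) unfolding proper_coloring_def by blast
  qed
  show ?thesis using pq rec inC ne by blast
qed



lemma kappa0:
  assumes V: "finite V" and uv: "u \<in> V" "v \<in> V" "u \<noteq> v"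
  shows "\<exists>\<kappa>0. \<kappa>0 \<in> V \<rightarrow>\<^sub>E UNIV \<and> inj_on \<kappa>0 V \<and> \<kappa>0 ` V = {0..<card V} \<and> \<kappa>0 u = 0 \<and> \<kappa>0 v = (1::nat)"
proof -
  let ?n = "card V"
  have cuv: "card {u,v} = 2" using uv(3) by simp
  have n2: "?n \<ge> 2" using card_mono[OF V, of "{u,v}"] uv cuv by simp
  have "card (V - {u,v}) = ?n - 2" using V uv cuv by (simp add: card_Diff_subset)
  then have "card (V - {u,v}) = card {2..<?n}" by simp
  then obtain h where h: "bij_betw h (V - {u,v}) {2..<?n}"
    using finite_same_card_bij[of "V - {u,v}" "{2..<?n}"] V by auto
  define \<kappa>0 where "\<kappa>0 x = (if x = u then 0 else if x = v then 1 else if x \<in> V then h x else undefined)" for x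
  have hx: "x \<in> V - {u,v} \<Longrightarrow> h x \<in> {2..<?n}" for x using h by (auto simp: bij_betw_def)
  have hinj: "inj_on h (V - {u,v})" using h by (simp add: bij_betw_def)
  have himg: "h ` (V - {u,v}) = {2..<?n}" using h by (simp add: bij_betw_def)
  have ku: "\<kappa>0 u = 0" and kv: "\<kappa>0 v = 1" using uv unfolding \<kappa>0_def by auto
  have val: "\<kappa>0 z = h z" "h z \<ge> 2" if "z \<in> V - {u,v}" for z
    using that hx[OF that] unfolding \<kappa>0_def by auto
  have z0: "\<kappa>0 z = 0 \<Longrightarrow> z = u" if "z \<in> V" for z
  proof -
    assume a: "\<kappa>0 z = 0"
    show "z = u"
    proof (rule ccontr)
      assume "z \<noteq> u"
      moreover have "z \<noteq> v" using a kv by auto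
      ultimately have "z \<in> V - {u,v}" using that by simp
      then show False using val[of z] a by simp
    qed
  qed
  have z1: "\<kappa>0 z = 1 \<Longrightarrow> z = v" if "z \<in> V" for z
  proof -
    assume a: "\<kappa>0 z = 1"
    show "z = v"
    proof (rule ccontr)
      assume "z \<noteq> v"
      moreover have "z \<noteq> u" using a ku by auto
      ultimately have "z \<in> V - {u,v}" using that by simp
      then show False using val[of z] a by simp
    qed
  qed
  have "\<kappa>0 \<in> V \<rightarrow>\<^sub>E UNIV" using uv unfolding \<kappa>0_def by (auto simp: PiE_def extensional_def)
  moreover have "inj_on \<kappa>0 V"
  proof (rule inj_onI)
    fix x y assume xy: "x \<in> V" "y \<in> V" "\<kappa>0 x = \<kappa>0 y"
    show "x = y"
    proof (cases "x \<in> {u,v}")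
      case True
      then consider "x = u" | "x = v" by blast
      then show ?thesis
      proof cases
        case 1
        then have "\<kappa>0 y = 0" using xy(3) ku by simp
        then show ?thesis using z0[OF xy(2)] 1 by simp
      next
        case 2
        then have "\<kappa>0 y = 1" using xy(3) kv by simp
        then show ?thesis using z1[OF xy(2)] 2 by simp
      qed
    next
      case False
      show ?thesis
      proof (cases "y \<in> {u,v}")
        case True
        then consider "y = u" | "y = v" by blast
        then show ?thesis
        proof cases
          case 1
          then have "\<kappa>0 x = 0" using xy(3) ku by simp
          then show ?thesis using z0[OF xy(1)] 1 by simp
        next
          case 2
          then have "\<kappa>0 x = 1" using xy(3) kv by simp
          then show ?thesis using z1[OF xy(1)] 2 by simp
        qed
      next
        case F2: False
        then have "h x = h y" using xy val[of x] val[of y] False by simp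
        moreover have "x \<in> V - {u,v}" "y \<in> V - {u,v}" using xy False F2 by auto
        ultimately show ?thesis using inj_onD[OF hinj] by blast
      qed
    qed
  qed
  moreover have "\<kappa>0 ` V = {0..<?n}"
  proof
    show "\<kappa>0 ` V \<subseteq> {0..<?n}"
    proof
      fix k assume "k \<in> \<kappa>0 ` V"
      then obtain z where z: "z \<in> V" "k = \<kappa>0 z" by blast
      show "k \<in> {0..<?n}"
      proof (cases "z \<in> {u,v}")
        case True then show ?thesis using z ku kv n2 by auto
      next
        case False
        then have "z \<in> V - {u,v}" using z by simp
        then show ?thesis using z val[of z] hx[of z] by simp
      qed
    qed
    show "{0..<?n} \<subseteq> \<kappa>0 ` V"
    proof
      fix k assume k: "k \<in> {0..<?n}"
      show "k \<in> \<kappa>0 ` V"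
      proof (cases "k = 0 \<or> k = 1")
        case True
        then show ?thesis
        proof
          assume "k = 0" then show ?thesis using ku uv(1) by (metis image_eqI)
        next
          assume "k = 1" then show ?thesis using kv uv(2) by (metis image_eqI)
        qed
      next
        case False
        then have "k \<in> {2..<?n}" using k by auto
        then obtain x where x: "x \<in> V - {u,v}" "k = h x" using himg by (metis imageE)
        then have "\<kappa>0 x = k" using val[of x] by simp
        then show ?thesis using x by blast
      qed
    qed
  qed
  ultimately show ?thesis using ku kv by blast
qed

lemma kappa0_Col:
  assumes V: "finite V" and sg: "simple_graph V E" and uvE: "{u,v} \<in> E"
  shows "\<exists>\<kappa>0. \<kappa>0 \<in> Col V E (mk (mset_set {2..<card V}) 1 1) \<and> \<kappa>0 u = 0 \<and> \<kappa>0 v = 1"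
proof -
  have uv: "u \<in> V" "v \<in> V" "u \<noteq> v" using sg_edge[OF sg uvE] by auto
  obtain \<kappa>0 where k: "\<kappa>0 \<in> V \<rightarrow>\<^sub>E UNIV" "inj_on \<kappa>0 V" "\<kappa>0 ` V = {0..<card V}" "\<kappa>0 u = 0" "\<kappa>0 v = 1"
    using kappa0[OF V uv] by blast
  have n2: "card V \<ge> 2" using card_mono[OF V, of "{u,v}"] uv by simp
  have "image_mset \<kappa>0 (mset_set V) = mset_set {0..<card V}"
    using image_mset_mset_set[OF k(2)] k(3) by simp
  also have "\<dots> = mk (mset_set {2..<card V}) 1 1"
    using n2 by (auto simp: multiset_eq_iff count_mk count_mset_set')
  finally have im: "image_mset \<kappa>0 (mset_set V) = mk (mset_set {2..<card V}) 1 1" .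
  have "proper_coloring V E \<kappa>0"
    unfolding proper_coloring_def
  proof (intro conjI ballI impI)
    show "\<kappa>0 \<in> V \<rightarrow>\<^sub>E UNIV" by (rule k(1))
    fix a b assume ab: "a \<in> V" "b \<in> V" "{a,b} \<in> E"
    have "a \<noteq> b" using sg_edge(3)[OF sg ab(3)] .
    then show "\<kappa>0 a \<noteq> \<kappa>0 b" using inj_onD[OF k(2) _ ab(1) ab(2)] by blast
  qed
  then show ?thesis using im k unfolding Col_def by blast
qed



lemma count_ineq:
  assumes V: "finite V" and sg: "simple_graph V E" and uvE: "{u,v} \<in> E"
    and N: "N = mset_set {2..<card V}"
  shows "card (Col V E (mk N 2 0)) + card (Col V E (mk N 0 2)) < card (Col V E (mk N 1 1))"
proof -
  have okN: "ok N" unfolding N ok_def by simp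
  obtain idx :: "'a \<Rightarrow> nat" where idx: "inj_on idx V"
    using finite_imp_inj_to_nat_seg[OF V] by blast
  obtain \<kappa>0 where k0: "\<kappa>0 \<in> Col V E (mk N 1 1)" "\<kappa>0 u = 0" "\<kappa>0 v = 1"
    using kappa0_Col[OF V sg uvE] N by blast
  let ?Ca = "Col V E (mk N 2 0)" and ?Cb = "Col V E (mk N 0 2)" and ?C = "Col V E (mk N 1 1)"
  let ?P = "Phi V idx"
  have vuE: "{v,u} \<in> E" using uvE by (simp add: insert_commute)
  have P: "\<exists>c\<le>1. \<exists>p q. p \<in> V \<and> q \<in> V \<and> idx p < idx q \<and> \<kappa> = (?P \<kappa>)(q := c)
     \<and> {x\<in>V. ?P \<kappa> x = c} = {p} \<and> {x\<in>V. ?P \<kappa> x = 1 - c} = {q}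
     \<and> ?P \<kappa> \<in> ?C \<and> ?P \<kappa> \<noteq> \<kappa>0" if k: "\<kappa> \<in> ?Ca \<union> ?Cb" for \<kappa>
  proof (cases "\<kappa> \<in> ?Ca")
    case True
    then have "\<kappa> \<in> Col V E (mk N (2 - 2*0) (2*0))" by simp
    from phi_props[OF V sg idx okN _ this uvE, of \<kappa>0] k0
    show ?thesis by (intro exI[of _ 0]) simp
  next
    case False
    then have "\<kappa> \<in> Col V E (mk N (2 - 2*1) (2*1))" using k by simp
    from phi_props[OF V sg idx okN _ this vuE, of \<kappa>0] k0
    show ?thesis by (intro exI[of _ 1]) simp
  qed
  have sub: "?P ` (?Ca \<union> ?Cb) \<subseteq> ?C - {\<kappa>0}"
    using P by blast
  have inj: "inj_on ?P (?Ca \<union> ?Cb)"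
  proof (rule inj_onI)
    fix \<kappa>1 \<kappa>2 assume k1: "\<kappa>1 \<in> ?Ca \<union> ?Cb" and k2: "\<kappa>2 \<in> ?Ca \<union> ?Cb" and eq: "?P \<kappa>1 = ?P \<kappa>2"
    obtain c1 p1 q1 where A: "c1 \<le> 1" "idx p1 < idx q1" "\<kappa>1 = (?P \<kappa>1)(q1 := c1)"
       "{x\<in>V. ?P \<kappa>1 x = c1} = {p1}" "{x\<in>V. ?P \<kappa>1 x = 1 - c1} = {q1}"
      using P[OF k1] by blast
    obtain c2 p2 q2 where B: "c2 \<le> 1" "idx p2 < idx q2" "\<kappa>2 = (?P \<kappa>2)(q2 := c2)"
       "{x\<in>V. ?P \<kappa>2 x = c2} = {p2}" "{x\<in>V. ?P \<kappa>2 x = 1 - c2} = {q2}"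
      using P[OF k2] by blast
    show "\<kappa>1 = \<kappa>2"
    proof (cases "c1 = c2")
      case True
      then have "{q1} = {q2}" using A(5) B(5) eq by simp
      then have "q1 = q2" by simp
      from A(3) have "\<kappa>1 = (?P \<kappa>2)(q2 := c2)" by (simp only: eq True \<open>q1 = q2\<close>)
      then show ?thesis by (rule HOL.trans[OF _ B(3)[symmetric]])
    next
      case False
      have cc1: "1 - c2 = c1" and cc2: "1 - c1 = c2" using A(1) B(1) False by arith+
      have "{p1} = {q2}" using A(4) B(5) eq by (simp only: cc1)
      moreover have "{q1} = {p2}" using A(5) B(4) eq by (simp only: cc2)
      ultimately show ?thesis using A(2) B(2) by simp
    qed
  qed
  have disj: "?Ca \<inter> ?Cb = {}"
  proof -
    have "mk N 2 0 \<noteq> mk N 0 2"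
    proof
      assume "mk N 2 0 = mk N 0 2"
      then have "count (mk N 2 0) 0 = count (mk N 0 2) 0" by simp
      then show False using okN by (simp add: count_mk ok_def not_in_iff)
    qed
    then show ?thesis unfolding Col_def by auto
  qed
  have fin: "finite ?Ca" "finite ?Cb" "finite ?C" using fin_Col[OF V] by auto
  have "card ?Ca + card ?Cb = card (?Ca \<union> ?Cb)"
    using card_Un_disjoint[OF fin(1,2) disj] by simp
  also have "\<dots> = card (?P ` (?Ca \<union> ?Cb))" using card_image[OF inj] by simp
  also have "\<dots> \<le> card (?C - {\<kappa>0})" using card_mono[OF _ sub] fin(3) by simp
  also have "\<dots> < card ?C" by (rule card_Diff1_less[OF fin(3) k0(1)])
  finally show ?thesis .
qed

lemma sum3: "(\<Sum>j\<le>(2::nat). f j) = f 0 + f 1 + f 2"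
  by (simp add: numeral_2_eq_2)

theorem mainTheorem1:
  fixes V :: "'a set" and E :: "'a set set"
  assumes "simple_graph V E"
  shows "E = {} \<longleftrightarrow> chromatic_sym V E \<in> Gamma"
proof
  have V: "finite V" using assms unfolding simple_graph_def by simp
  assume "E = {}"
  then show "chromatic_sym V E \<in> Gamma" using chrom_empty[OF V] pw_Gamma by simp
next
  have V: "finite V" using assms unfolding simple_graph_def by simp
  assume G: "chromatic_sym V E \<in> Gamma"
  show "E = {}"
  proof (rule ccontr)
    assume "E \<noteq> {}"
    then obtain e where "e \<in> E" by blast
    then have "\<exists>u v. e = {u, v} \<and> u \<noteq> v \<and> u \<in> V \<and> v \<in> V"
      using assms unfolding simple_graph_def by simp
    then obtain u v where "e = {u,v}" by blast
    then have uvE: "{u,v} \<in> E" using \<open>e \<in> E\<close> by simp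
    define N where "N = mset_set {2..<card V}"
    have okN: "ok N" unfolding N_def ok_def by simp
    have "S (chromatic_sym V E) N 2 = 0"
      using Gamma_Inv[OF G] okN unfolding Inv_def by (simp del: One_nat_def)
    moreover have "S (chromatic_sym V E) N 2 =
        chromatic_sym V E (mk N 2 0) - chromatic_sym V E (mk N 1 1) + chromatic_sym V E (mk N 0 2)"
      unfolding S_def sum3 by simp
    moreover have "card (Col V E (mk N 2 0)) + card (Col V E (mk N 0 2)) < card (Col V E (mk N 1 1))"
      by (rule count_ineq[OF V assms uvE N_def])
    ultimately show False unfolding chrom_Col by linarith
  qed
qed


end
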